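(* In the setting of the context, suppose for every $i\in\mathcal D$: $k^C_{1,i}<1$, $k^C_{2,i}<R^C_{ti}$, $k^C_{3,i}>0$, $k^V_{1,i}<1$, $k^V_{2,i}<R^V_{ti}$, $0<k^V_{3,i}<\frac{1}{L^V_{ti}}(k^V_{1,i}-1)(k^V_{2,i}-R^V_{ti})$. Fix $\bar\sigma>0$ and put $\eta_i=\bar\sigma C_{ti}$, $p^C_{22,i}=\frac{L^C_{ti}\eta_i}{C_{ti}(1-k^C_{1,i})}$, $h_i=L^V_{ti}k^V_{3,i}-(k^V_{1,i}-1)(k^V_{2,i}-R^V_{ti})$, $$P_i=\mathrm{blockdiag}\Big(\eta_i,\;\begin{bmatrix}p^C_{22,i}&0\\0&\frac{k^C_{3,i}}{L^C_{ti}}p^C_{22,i}\end{bmatrix},\;\frac{\eta_i}{C_{ti}h_i}\begin{bmatrix}L^V_{ti}(k^V_{2,i}-R^V_{ti})&L^V_{ti}k^V_{3,i}\\L^V_{ti}k^V_{3,i}&k^V_{3,i}(k^V_{1,i}-1)\end{bmatrix}\Big),$$ and $\mathbf P=\mathrm{diag}(P_1,\dots,P_N)$. Then $\mathbf F^T\mathbf P+\mathbf P\mathbf F\le0$.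
   Context: Let $N\ge1$, $\mathcal D=\{1,\dots,N\}$, $\mathcal G_{el}$ an undirected graph on $\mathcal D$ with neighbor sets $\mathcal N_i$; for each $i$ let $C_{ti},L^C_{ti},R^C_{ti},L^V_{ti},R^V_{ti},R_{Li}>0$ and for each edge $R_{ij}=R_{ji}>0$. Let $$F_i=\begin{bmatrix}0&\frac{1}{C_{ti}}&0&\frac{1}{C_{ti}}&0\\ \frac{k^C_{1,i}-1}{L^C_{ti}}&\frac{k^C_{2,i}-R^C_{ti}}{L^C_{ti}}&\frac{k^C_{3,i}}{L^C_{ti}}&0&0\\ 0&-1&0&0&0\\ \frac{k^V_{1,i}-1}{L^V_{ti}}&0&0&\frac{k^V_{2,i}-R^V_{ti}}{L^V_{ti}}&\frac{k^V_{3,i}}{L^V_{ti}}\\ -1&0&0&0&0\end{bmatrix},$$ $e_1=(1,0,0,0,0)^T$, and let $\mathbf F\in\mathbb{R}^{5N\times5N}$ (closed-loop matrix of the cluster of microgrids) have $(i,i)$ block $F_i-\Big(\frac{1}{R_{Li}C_{ti}}+\sum_{j\in\mathcal N_i}\frac{1}{R_{ij}C_{ti}}\Big)e_1e_1^T$ and $(i,j)$ block ($j\ne i$) equal to $\frac{1}{R_{ij}C_{ti}}e_1e_1^T$ if $j\in\mathcal N_i$, $0$ otherwise. Block sizes in $\mathrm{blockdiag}$ are $1,2,2$. Matrix inequalities are in the semidefinite sense. *)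

theory Defs
  imports "Jordan_Normal_Form.Matrix"
begin

text \<open>Subsystems are indexed by i in {0..<N} (0-based). The graph is given by a
  relation E on {0..<N}; the neighbour set of i is {j. j < N \<and> E i j}.
  Global index of the a-th state (a < 5) of subsystem i is 5*i + a.\<close>

definition neg_semidef :: "nat \<Rightarrow> real mat \<Rightarrow> bool" where
  "neg_semidef n A \<longleftrightarrow> A \<in> carrier_mat n n \<and> (\<forall>x \<in> carrier_vec n. x \<bullet> (A *\<^sub>v x) \<le> 0)"

definition F_loc :: "real \<Rightarrow> real \<Rightarrow> real \<Rightarrow> real \<Rightarrow> real \<Rightarrow>
   real \<Rightarrow> real \<Rightarrow> real \<Rightarrow> real \<Rightarrow> real \<Rightarrow> real \<Rightarrow> real mat" where
  "F_loc Ct LC RC LV RV k1C k2C k3C k1V k2V k3V = mat_of_rows_list 5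
     [[0, 1/Ct, 0, 1/Ct, 0],
      [(k1C - 1)/LC, (k2C - RC)/LC, k3C/LC, 0, 0],
      [0, -1, 0, 0, 0],
      [(k1V - 1)/LV, 0, 0, (k2V - RV)/LV, k3V/LV],
      [-1, 0, 0, 0, 0]]"

definition P_loc :: "real \<Rightarrow> real \<Rightarrow> real \<Rightarrow> real \<Rightarrow> real \<Rightarrow> real \<Rightarrow>
   real \<Rightarrow> real \<Rightarrow> real \<Rightarrow> real \<Rightarrow> real \<Rightarrow> real \<Rightarrow> real mat" where
  "P_loc sigma Ct LC RC LV RV k1C k2C k3C k1V k2V k3V =
    (let eta = sigma * Ct;
         p22 = LC * eta / (Ct * (1 - k1C));
         h = LV * k3V - (k1V - 1) * (k2V - RV);
         c = eta / (Ct * h)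
     in mat_of_rows_list 5
     [[eta, 0, 0, 0, 0],
      [0, p22, 0, 0, 0],
      [0, 0, k3C / LC * p22, 0, 0],
      [0, 0, 0, c * (LV * (k2V - RV)), c * (LV * k3V)],
      [0, 0, 0, c * (LV * k3V), c * (k3V * (k1V - 1))]])"

definition F_big :: "nat \<Rightarrow> (nat \<Rightarrow> nat \<Rightarrow> bool) \<Rightarrow> (nat \<Rightarrow> nat \<Rightarrow> real) \<Rightarrow> (nat \<Rightarrow> real) \<Rightarrow>
   (nat \<Rightarrow> real) \<Rightarrow> (nat \<Rightarrow> real) \<Rightarrow> (nat \<Rightarrow> real) \<Rightarrow> (nat \<Rightarrow> real) \<Rightarrow> (nat \<Rightarrow> real) \<Rightarrow>
   (nat \<Rightarrow> real) \<Rightarrow> (nat \<Rightarrow> real) \<Rightarrow> (nat \<Rightarrow> real) \<Rightarrow> (nat \<Rightarrow> real) \<Rightarrow> (nat \<Rightarrow> real) \<Rightarrow> (nat \<Rightarrow> real) \<Rightarrow>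
   real mat" where
  "F_big N E R RL Ct LC RC LV RV k1C k2C k3C k1V k2V k3V =
    mat (5*N) (5*N) (\<lambda>(r, c).
      let i = r div 5; a = r mod 5; j = c div 5; b = c mod 5 in
      if i = j then
        F_loc (Ct i) (LC i) (RC i) (LV i) (RV i) (k1C i) (k2C i) (k3C i) (k1V i) (k2V i) (k3V i) $$ (a, b)
        - (if a = 0 \<and> b = 0
           then 1 / (RL i * Ct i) + (\<Sum>j' \<in> {j'. j' < N \<and> E i j'}. 1 / (R i j' * Ct i))
           else 0)
      else if E i j \<and> a = 0 \<and> b = 0 then 1 / (R i j * Ct i) else 0)"

definition P_big :: "nat \<Rightarrow> real \<Rightarrow> (nat \<Rightarrow> real) \<Rightarrow> (nat \<Rightarrow> real) \<Rightarrow> (nat \<Rightarrow> real) \<Rightarrow>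
   (nat \<Rightarrow> real) \<Rightarrow> (nat \<Rightarrow> real) \<Rightarrow> (nat \<Rightarrow> real) \<Rightarrow> (nat \<Rightarrow> real) \<Rightarrow> (nat \<Rightarrow> real) \<Rightarrow>
   (nat \<Rightarrow> real) \<Rightarrow> (nat \<Rightarrow> real) \<Rightarrow> (nat \<Rightarrow> real) \<Rightarrow> real mat" where
  "P_big N sigma Ct LC RC LV RV k1C k2C k3C k1V k2V k3V =
    mat (5*N) (5*N) (\<lambda>(r, c).
      let i = r div 5; a = r mod 5; j = c div 5; b = c mod 5 in
      if i = j then
        P_loc sigma (Ct i) (LC i) (RC i) (LV i) (RV i) (k1C i) (k2C i) (k3C i) (k1V i) (k2V i) (k3V i) $$ (a, b)
      else 0)"

end

theory Submission
  imports Defs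
begin

lemma sum5: "(\<Sum>a<(5::nat). f a) = f 0 + f 1 + f 2 + f 3 + (f 4 :: real)"
  by (simp add: eval_nat_numeral)

lemma local_alg:
  fixes Ct LC RC LV RV k1C k2C k3C k1V k2V k3V sigma w :: real and y :: "nat \<Rightarrow> real"
  assumes p: "Ct > 0" "LC > 0" "LV > 0"
    and g: "k1C < 1" "k2V < RV" "k1V < 1" "k3V < (1 / LV) * (k1V - 1) * (k2V - RV)"
  shows "(\<Sum>a<5. (\<Sum>b<5. P_loc sigma Ct LC RC LV RV k1C k2C k3C k1V k2V k3V $$ (a,b) * y b) *
            ((\<Sum>b<5. F_loc Ct LC RC LV RV k1C k2C k3C k1V k2V k3V $$ (a,b) * y b) + (if a = 0 then w else 0)))
       = sigma * (k2C - RC) / (1 - k1C) * (y 1)^2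
         + sigma / (LV * k3V - (k1V - 1) * (k2V - RV)) * ((k2V - RV) * y 3 + k3V * y 4)^2
         + sigma * Ct * y 0 * w"
proof -
  define H where "H = LV * k3V - (k1V - 1) * (k2V - RV)"
  define K where "K = 1 - k1C"
  have h: "H < 0"
    using g(4) p(3) by (simp add: field_simps H_def)
  have K: "K > 0" using g by (simp add: K_def)
  have k1: "k1C = 1 - K" by (simp add: K_def)
  have k3: "k3V = (H + (k1V - 1) * (k2V - RV)) / LV" using p(3) by (simp add: H_def field_simps)
  show ?thesis
    unfolding sum5 P_loc_def F_loc_def Let_def mat_of_rows_list_def
    apply (simp add: Let_def)
    apply (simp only: H_def[symmetric] k1)
    apply (simp only: k3)
    using p h K apply (simp add: field_simps power2_eq_square)
    done

qed

lemma blocksum: "(\<Sum>r<5*(N::nat). g r) = (\<Sum>i<N. \<Sum>a<5. g (5*i+a) :: real)"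
proof (induction N)
  case 0 then show ?case by simp
next
  case (Suc N)
  have e: "5 * Suc N = Suc (Suc (Suc (Suc (Suc (5*N)))))" by simp
  show ?case unfolding e by (simp only: sum.lessThan_Suc Suc.IH sum5) (simp add: add_ac eval_nat_numeral)
qed

lemma dm5[simp]: "a < 5 \<Longrightarrow> (5*i+a) div 5 = (i::nat)" "a < 5 \<Longrightarrow> (5*i+a) mod 5 = (a::nat)"
  by auto

lemma lt5N: "i < N \<Longrightarrow> a < 5 \<Longrightarrow> 5*i+a < 5*(N::nat)" by linarith

lemma matvec_entry: "A \<in> carrier_mat n n \<Longrightarrow> v \<in> carrier_vec n \<Longrightarrow> r < n \<Longrightarrow>
   (A *\<^sub>v v) $ r = (\<Sum>c<n. A $$ (r,c) * v $ c :: real)"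
  by (simp add: scalar_prod_def row_def atLeast0LessThan)

theorem proposition6:
  fixes N :: nat and E :: "nat \<Rightarrow> nat \<Rightarrow> bool" and R :: "nat \<Rightarrow> nat \<Rightarrow> real"
    and RL Ct LC RC LV RV k1C k2C k3C k1V k2V k3V :: "nat \<Rightarrow> real"
    and sigma :: real
  assumes "N \<ge> 1"
    and E_sym: "\<And>i j. i < N \<Longrightarrow> j < N \<Longrightarrow> E i j \<longleftrightarrow> E j i"
    and E_irrefl: "\<And>i. i < N \<Longrightarrow> \<not> E i i"
    and R_sym: "\<And>i j. i < N \<Longrightarrow> j < N \<Longrightarrow> E i j \<Longrightarrow> R i j = R j i"
    and R_pos: "\<And>i j. i < N \<Longrightarrow> j < N \<Longrightarrow> E i j \<Longrightarrow> R i j > 0"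
    and pos: "\<And>i. i < N \<Longrightarrow> Ct i > 0 \<and> LC i > 0 \<and> RC i > 0 \<and> LV i > 0 \<and> RV i > 0 \<and> RL i > 0"
    and gains: "\<And>i. i < N \<Longrightarrow> k1C i < 1 \<and> k2C i < RC i \<and> k3C i > 0 \<and> k1V i < 1 \<and> k2V i < RV i
                 \<and> 0 < k3V i \<and> k3V i < (1 / LV i) * (k1V i - 1) * (k2V i - RV i)"
    and "sigma > 0"
  shows "neg_semidef (5*N)
     (transpose_mat (F_big N E R RL Ct LC RC LV RV k1C k2C k3C k1V k2V k3V)
        * P_big N sigma Ct LC RC LV RV k1C k2C k3C k1V k2V k3V
      + P_big N sigma Ct LC RC LV RV k1C k2C k3C k1V k2V k3V
        * F_big N E R RL Ct LC RC LV RV k1C k2C k3C k1V k2V k3V)"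
proof -
  let ?F = "F_big N E R RL Ct LC RC LV RV k1C k2C k3C k1V k2V k3V"
  let ?P = "P_big N sigma Ct LC RC LV RV k1C k2C k3C k1V k2V k3V"
  let ?n = "5*N"
  define dd where "dd i = 1 / (RL i * Ct i) + (\<Sum>j' \<in> {j'. j' < N \<and> E i j'}. 1 / (R i j' * Ct i))" for i
  have Fc: "?F \<in> carrier_mat ?n ?n" by (simp add: F_big_def)
  have Pc: "?P \<in> carrier_mat ?n ?n" by (simp add: P_big_def)
  have Fe: "?F $$ (5*i+a, 5*j+b) = (if i = j then
        F_loc (Ct i) (LC i) (RC i) (LV i) (RV i) (k1C i) (k2C i) (k3C i) (k1V i) (k2V i) (k3V i) $$ (a, b)
        - (if a = 0 \<and> b = 0 then dd i else 0)
      else if E i j \<and> a = 0 \<and> b = 0 then 1 / (R i j * Ct i) else 0)"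
    if "i < N" "j < N" "a < 5" "b < 5" for i j a b
    using that by (simp add: F_big_def lt5N Let_def dd_def)
  have Pe: "?P $$ (5*i+a, 5*j+b) = (if i = j then
        P_loc sigma (Ct i) (LC i) (RC i) (LV i) (RV i) (k1C i) (k2C i) (k3C i) (k1V i) (k2V i) (k3V i) $$ (a, b)
      else 0)"
    if "i < N" "j < N" "a < 5" "b < 5" for i j a b
    using that by (simp add: P_big_def lt5N Let_def)
  have Psym: "transpose_mat ?P = ?P"
  proof (rule eq_matI)
    fix r c assume rc: "r < dim_row ?P" "c < dim_col ?P"
    then have r: "r < ?n" and c: "c < ?n" by (simp_all add: P_big_def)
    have "P_loc sigma (Ct i) (LC i) (RC i) (LV i) (RV i) (k1C i) (k2C i) (k3C i) (k1V i) (k2V i) (k3V i) $$ (a, b)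
        = P_loc sigma (Ct i) (LC i) (RC i) (LV i) (RV i) (k1C i) (k2C i) (k3C i) (k1V i) (k2V i) (k3V i) $$ (b, a)"
      if "a < 5" "b < 5" for a b i
    proof -
      have "a \<in> {0,1,2,3,4}" "b \<in> {0,1,2,3,4}" using that by auto
      then show ?thesis by (auto simp: P_loc_def Let_def mat_of_rows_list_def)
    qed
    then show "transpose_mat ?P $$ (r, c) = ?P $$ (r, c)"
      using r c by (auto simp: P_big_def Let_def)
  qed (simp_all add: P_big_def)
  show ?thesis
  proof (unfold neg_semidef_def, intro conjI ballI)
    show "transpose_mat ?F * ?P + ?P * ?F \<in> carrier_mat ?n ?n" using Fc Pc by simp
    fix x :: "real vec" assume x: "x \<in> carrier_vec ?n"
    have Px: "?P *\<^sub>v x \<in> carrier_vec ?n" and Fx: "?F *\<^sub>v x \<in> carrier_vec ?n"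
      using Pc Fc x by auto
    have step1: "x \<bullet> ((transpose_mat ?F * ?P + ?P * ?F) *\<^sub>v x) = 2 * ((?P *\<^sub>v x) \<bullet> (?F *\<^sub>v x))"
    proof -
      have "(transpose_mat ?F * ?P + ?P * ?F) *\<^sub>v x = transpose_mat ?F *\<^sub>v (?P *\<^sub>v x) + ?P *\<^sub>v (?F *\<^sub>v x)"
        using Fc Pc x by (simp add: add_mult_distrib_mat_vec[of _ ?n ?n])
      moreover have "x \<bullet> (transpose_mat ?F *\<^sub>v (?P *\<^sub>v x)) = (?P *\<^sub>v x) \<bullet> (?F *\<^sub>v x)"
      proof -
        have "x \<bullet> (transpose_mat ?F *\<^sub>v (?P *\<^sub>v x)) = (transpose_mat ?F *\<^sub>v (?P *\<^sub>v x)) \<bullet> x"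
          using Fc Px x by (intro comm_scalar_prod[of _ ?n]) auto
        also have "\<dots> = (?P *\<^sub>v x) \<bullet> (?F *\<^sub>v x)"
          by (rule transpose_vec_mult_scalar[OF Fc x Px])
        finally show ?thesis .
      qed
      moreover have "x \<bullet> (?P *\<^sub>v (?F *\<^sub>v x)) = (?P *\<^sub>v x) \<bullet> (?F *\<^sub>v x)"
        using transpose_vec_mult_scalar[OF Pc Fx x] Psym by simp
      ultimately show ?thesis
        using x Fc Pc Px Fx by (simp add: scalar_prod_add_distrib[of _ ?n])
    qed
    define y where "y i = x $ (5*i)" for i
    define w where "w i = - dd i * y i + (\<Sum>j<N. if E i j then 1 / (R i j * Ct i) * y j else 0)" for i
    have Pxe: "(?P *\<^sub>v x) $ (5*i+a) = (\<Sum>b<5.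
        P_loc sigma (Ct i) (LC i) (RC i) (LV i) (RV i) (k1C i) (k2C i) (k3C i) (k1V i) (k2V i) (k3V i) $$ (a, b)
          * x $ (5*i+b))" if "i < N" "a < 5" for i a
    proof -
      have "(?P *\<^sub>v x) $ (5*i+a) = (\<Sum>j<N. \<Sum>b<5. ?P $$ (5*i+a, 5*j+b) * x $ (5*j+b))"
        using matvec_entry[OF Pc x] lt5N[OF that] blocksum by simp
      also have "\<dots> = (\<Sum>j<N. if j = i then (\<Sum>b<5.
        P_loc sigma (Ct i) (LC i) (RC i) (LV i) (RV i) (k1C i) (k2C i) (k3C i) (k1V i) (k2V i) (k3V i) $$ (a, b)
          * x $ (5*i+b)) else 0)"
        by (rule sum.cong, simp, rule sum.cong[THEN trans], simp) (use that Pe in auto)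
      finally show ?thesis using that by simp
    qed
    have Fxe: "(?F *\<^sub>v x) $ (5*i+a) = (\<Sum>b<5.
        F_loc (Ct i) (LC i) (RC i) (LV i) (RV i) (k1C i) (k2C i) (k3C i) (k1V i) (k2V i) (k3V i) $$ (a, b)
          * x $ (5*i+b)) + (if a = 0 then w i else 0)" if "i < N" "a < 5" for i a
    proof -
      let ?L = "F_loc (Ct i) (LC i) (RC i) (LV i) (RV i) (k1C i) (k2C i) (k3C i) (k1V i) (k2V i) (k3V i)"
      have "(?F *\<^sub>v x) $ (5*i+a) = (\<Sum>j<N. \<Sum>b<5. ?F $$ (5*i+a, 5*j+b) * x $ (5*j+b))"
        using matvec_entry[OF Fc x] lt5N[OF that] blocksum by simp
      also have "\<dots> = (\<Sum>j<N. (if j = i then (\<Sum>b<5. ?L $$ (a, b) * x $ (5*i+b))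
             - (if a = 0 then dd i * y i else 0) else 0)
           + (if a = 0 then (if E i j then 1 / (R i j * Ct i) * y j else 0) else 0))"
      proof (rule sum.cong, simp)
        fix j assume j: "j \<in> {..<N}"
        show "(\<Sum>b<5. ?F $$ (5*i+a, 5*j+b) * x $ (5*j+b)) = (if j = i then (\<Sum>b<5. ?L $$ (a, b) * x $ (5*i+b))
             - (if a = 0 then dd i * y i else 0) else 0)
           + (if a = 0 then (if E i j then 1 / (R i j * Ct i) * y j else 0) else 0)"
        proof -
          have jN: "j < N" using j by simp
          have "(\<Sum>b<5. ?F $$ (5*i+a, 5*j+b) * x $ (5*j+b)) = (\<Sum>b<5. (if i = j then
              ?L $$ (a, b) - (if a = 0 \<and> b = 0 then dd i else 0)
              else if E i j \<and> a = 0 \<and> b = 0 then 1 / (R i j * Ct i) else 0) * x $ (5*j+b))"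
            by (rule sum.cong) (use that jN Fe in auto)
          then show ?thesis
            using jN that E_irrefl[of i] unfolding sum5
            by (auto simp: y_def algebra_simps)
        qed
      qed
      also have "\<dots> = (\<Sum>b<5. ?L $$ (a, b) * x $ (5*i+b)) + (if a = 0 then w i else 0)"
        using that by (simp add: sum.distrib w_def)
      finally show ?thesis .
    qed
    have "(?P *\<^sub>v x) \<bullet> (?F *\<^sub>v x) = (\<Sum>r<?n. (?P *\<^sub>v x) $ r * (?F *\<^sub>v x) $ r)"
    proof -
      have "dim_vec (?F *\<^sub>v x) = ?n" using Fc by simp
      then show ?thesis unfolding scalar_prod_def atLeast0LessThan by (simp only:)
    qed
    also have "\<dots> = (\<Sum>i<N. \<Sum>a<5. (?P *\<^sub>v x) $ (5*i+a) * (?F *\<^sub>v x) $ (5*i+a))"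
      by (rule blocksum)
    also have "\<dots> = (\<Sum>i<N. sigma * (k2C i - RC i) / (1 - k1C i) * (x $ (5*i+1))^2
         + sigma / (LV i * k3V i - (k1V i - 1) * (k2V i - RV i)) * ((k2V i - RV i) * x $ (5*i+3) + k3V i * x $ (5*i+4))^2
         + sigma * Ct i * y i * w i)"
    proof (rule sum.cong, simp)
      fix i assume i: "i \<in> {..<N}"
      have "(\<Sum>a<5. (?P *\<^sub>v x) $ (5*i+a) * (?F *\<^sub>v x) $ (5*i+a)) =
         (\<Sum>a<5. (\<Sum>b<5.
        P_loc sigma (Ct i) (LC i) (RC i) (LV i) (RV i) (k1C i) (k2C i) (k3C i) (k1V i) (k2V i) (k3V i) $$ (a, b)
          * (\<lambda>b. x $ (5*i+b)) b) * ((\<Sum>b<5.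
        F_loc (Ct i) (LC i) (RC i) (LV i) (RV i) (k1C i) (k2C i) (k3C i) (k1V i) (k2V i) (k3V i) $$ (a, b)
          * (\<lambda>b. x $ (5*i+b)) b) + (if a = 0 then w i else 0)))"
        using i Pxe Fxe by (intro sum.cong) auto
      also have "\<dots> = sigma * (k2C i - RC i) / (1 - k1C i) * (x $ (5*i+1))^2
         + sigma / (LV i * k3V i - (k1V i - 1) * (k2V i - RV i)) * ((k2V i - RV i) * x $ (5*i+3) + k3V i * x $ (5*i+4))^2
         + sigma * Ct i * x $ (5*i+0) * w i"
        using pos[of i] gains[of i] i by (intro local_alg) auto
      finally show "(\<Sum>a<5. (?P *\<^sub>v x) $ (5*i+a) * (?F *\<^sub>v x) $ (5*i+a)) = sigma * (k2C i - RC i) / (1 - k1C i) * (x $ (5*i+1))^2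
         + sigma / (LV i * k3V i - (k1V i - 1) * (k2V i - RV i)) * ((k2V i - RV i) * x $ (5*i+3) + k3V i * x $ (5*i+4))^2
         + sigma * Ct i * y i * w i" by (simp add: y_def)
    qed
    also have "\<dots> \<le> (\<Sum>i<N. sigma * Ct i * y i * w i)"
    proof (rule sum_mono)
      fix i assume i: "i \<in> {..<N}"
      have h: "LV i * k3V i - (k1V i - 1) * (k2V i - RV i) < 0"
        using gains[of i] pos[of i] i by (simp add: field_simps)
      have "sigma * (k2C i - RC i) / (1 - k1C i) * (x $ (5*i+1))^2 \<le> 0"
      proof -
        have "sigma * (k2C i - RC i) \<le> 0" using gains[of i] i \<open>sigma > 0\<close>
          by (intro mult_nonneg_nonpos) auto
        then have "sigma * (k2C i - RC i) / (1 - k1C i) \<le> 0" using gains[of i] i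
          by (intro divide_nonpos_pos) auto
        then show ?thesis by (rule mult_nonpos_nonneg) simp
      qed
      moreover have "sigma / (LV i * k3V i - (k1V i - 1) * (k2V i - RV i)) * ((k2V i - RV i) * x $ (5*i+3) + k3V i * x $ (5*i+4))^2 \<le> 0"
        using h \<open>sigma > 0\<close>
        by (intro mult_nonpos_nonneg) (auto intro: divide_pos_neg[THEN less_imp_le])
      ultimately show "sigma * (k2C i - RC i) / (1 - k1C i) * (x $ (5*i+1))^2
         + sigma / (LV i * k3V i - (k1V i - 1) * (k2V i - RV i)) * ((k2V i - RV i) * x $ (5*i+3) + k3V i * x $ (5*i+4))^2
         + sigma * Ct i * y i * w i \<le> sigma * Ct i * y i * w i" by linarith
    qed
    also have "\<dots> \<le> 0"
    proof -
      define f where "f i j = (if E i j then (y i * y j - ((y i)^2)) / R i j else 0)" for i j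
      have cw: "Ct i * y i * w i = - ((y i)^2) / RL i + (\<Sum>j<N. f i j)" if i: "i < N" for i
      proof -
        have ct: "Ct i > 0" using pos[OF i] by simp
        have S: "(\<Sum>j' \<in> {j'. j' < N \<and> E i j'}. 1 / (R i j' * Ct i)) = (\<Sum>j<N. if E i j then 1 / (R i j * Ct i) else 0)"
        proof -
          have st: "{j'. j' < N \<and> E i j'} = {j \<in> {..<N}. E i j}" by auto
          show ?thesis by (subst st) (rule sum.inter_filter, simp)
        qed
        have "Ct i * y i * w i = - ((y i)^2) / RL i + (\<Sum>j<N. Ct i * y i * ((if E i j then 1 / (R i j * Ct i) * y j else 0) - (if E i j then 1 / (R i j * Ct i) else 0) * y i))"
          unfolding w_def dd_def S using ct
          by (simp add: sum_distrib_left sum_subtractf sum_distrib_right algebra_simps power2_eq_square)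
        also have "\<dots> = - ((y i)^2) / RL i + (\<Sum>j<N. f i j)"
          using ct R_pos[of i] i by (intro arg_cong2[where f="(+)"] refl sum.cong) (auto simp: f_def field_simps power2_eq_square simp flip: add_divide_distrib)
        finally show ?thesis .
      qed
      have T: "(\<Sum>i<N. \<Sum>j<N. f i j) \<le> 0"
      proof -
        have "(\<Sum>i<N. \<Sum>j<N. f i j) = (\<Sum>i<N. \<Sum>j<N. f j i)" by (rule sum.swap)
        also have "\<dots> = (\<Sum>i<N. \<Sum>j<N. if E i j then (y i * y j - (y j)^2) / R i j else 0)"
          using E_sym R_sym by (intro sum.cong refl) (auto simp: f_def mult.commute)
        finally have eq: "(\<Sum>i<N. \<Sum>j<N. f i j) = (\<Sum>i<N. \<Sum>j<N. if E i j then (y i * y j - (y j)^2) / R i j else 0)" .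
        have "2 * (\<Sum>i<N. \<Sum>j<N. f i j) = (\<Sum>i<N. \<Sum>j<N. f i j + (if E i j then (y i * y j - (y j)^2) / R i j else 0))"
        proof -
          have "2 * (\<Sum>i<N. \<Sum>j<N. f i j) = (\<Sum>i<N. \<Sum>j<N. f i j) + (\<Sum>i<N. \<Sum>j<N. if E i j then (y i * y j - (y j)^2) / R i j else 0)"
            using eq by simp
          also have "\<dots> = (\<Sum>i<N. \<Sum>j<N. f i j + (if E i j then (y i * y j - (y j)^2) / R i j else 0))"
            by (simp add: sum.distrib)
          finally show ?thesis .
        qed
        also have "\<dots> = (\<Sum>i<N. \<Sum>j<N. if E i j then - ((y i - y j) ^ 2) / R i j else 0)"
          by (intro sum.cong refl) (auto simp: f_def power2_eq_square field_simps add_divide_distrib[symmetric] diff_divide_distrib[symmetric])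
        also have "\<dots> \<le> 0"
          using R_pos by (intro sum_nonpos) (auto simp: less_imp_le)
        finally show ?thesis by simp
      qed
      have "(\<Sum>i<N. sigma * Ct i * y i * w i) = sigma * (\<Sum>i<N. Ct i * y i * w i)"
        by (simp add: sum_distrib_left mult.assoc)
      also have "\<dots> = sigma * ((\<Sum>i<N. - ((y i)^2) / RL i) + (\<Sum>i<N. \<Sum>j<N. f i j))"
        using cw by (simp add: sum.distrib[symmetric])
      also have "\<dots> \<le> 0"
      proof -
        have "(\<Sum>i<N. - ((y i)^2) / RL i) \<le> 0"
          using pos by (intro sum_nonpos) (auto simp: less_imp_le)
        then show ?thesis using T \<open>sigma > 0\<close> by (intro mult_nonneg_nonpos) auto
      qed
      finally show ?thesis .
    qed
    finally have "(?P *\<^sub>v x) \<bullet> (?F *\<^sub>v x) \<le> 0" .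
    then show "x \<bullet> ((transpose_mat ?F * ?P + ?P * ?F) *\<^sub>v x) \<le> 0" using step1 by simp
  qed
qed

end
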